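(* Let $G$ be a finite group acting on a weighted simplicial complex $\Omega$ on $[n]$. Then there exist a weighted simplicial complex $\Omega'$ on $[n]$, obtained from $\Omega$ by increasing the weights of the facets (i.e. $\Omega'(S)=\Omega(S)$ for every $S$ that is not a facet of $\Omega$, $\Omega'$ has the same facets as $\Omega$, and $\Omega'(F)\geq\Omega(F)$ for each facet $F$), and an action of $G$ on $\Omega'$ which is free, whose action on $[n]$ is the given one, and which refines the given action, in the sense that there is a $G$-linear map $\tilde c\colon \widetilde{\mathcal F}(\Omega')\to\widetilde{\mathcal F}(\Omega)$ with $c\circ\tilde c=c'$, where $c,c'$ are the collapse maps of $\Omega,\Omega'$.
   Context: Write $[n]=\{0,\ldots,n\}$ and $\mathcal P_n$ for its power set. A weighted simplicial complex (wsc) on $[n]$ is a function $\Omega\colon\mathcal P_n\to\mathbb N=\{0,1,2,\ldots\}$ such that $S_1\subseteq S_2$ implies that $\Omega(S_1)$ divides $\Omega(S_2)$. A set $S$ with $\Omega(S)\neq0$ is a simplex; it is assumed that every singleton is a simplex. A facet is a simplex maximal under inclusion; $\mathcal F$ is the set of facets. The multiset $\widetilde{\mathcal F}=\widetilde{\mathcal F}(\Omega)$ contains each facet $F$ exactly $\Omega(F)$ times, and the collapse map $c\colon\widetilde{\mathcal F}\to\mathcal F$ sends each copy to the underlying facet. A map $f\colon X\to Y$ between $G$-sets is $G$-linear if $f(gx)=gf(x)$. A group action of $G$ on the wsc $\Omega$ consists of an action of $G$ on $[n]$ such that $\Omega(gS)=\Omega(S)$ for all $S\in\mathcal P_n$,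 $g\in G$ (this induces an action on $\mathcal F$), together with an action of $G$ on $\widetilde{\mathcal F}$ such that the collapse map $c$ is $G$-linear. The action on $\Omega$ is free if the action of $G$ on $\widetilde{\mathcal F}$ is free (every element of $\widetilde{\mathcal F}$ has trivial stabiliser). *)

theory Defs
  imports "HOL-Algebra.Group_Action"
begin

text \<open>Vertex set [n] = {0..n}; a wsc is a function on subsets of [n] (values on
other sets are irrelevant).\<close>

definition wsc :: "nat \<Rightarrow> (nat set \<Rightarrow> nat) \<Rightarrow> bool" where
  "wsc n \<Omega> \<longleftrightarrow>
     (\<forall>S1 S2. S1 \<subseteq> S2 \<and> S2 \<subseteq> {0..n} \<longrightarrow> \<Omega> S1 dvd \<Omega> S2) \<and>
     (\<forall>i\<in>{0..n}. \<Omega> {i} \<noteq> 0)"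

definition simplex :: "nat \<Rightarrow> (nat set \<Rightarrow> nat) \<Rightarrow> nat set \<Rightarrow> bool" where
  "simplex n \<Omega> S \<longleftrightarrow> S \<subseteq> {0..n} \<and> \<Omega> S \<noteq> 0"

definition facets :: "nat \<Rightarrow> (nat set \<Rightarrow> nat) \<Rightarrow> nat set set" where
  "facets n \<Omega> = {F. simplex n \<Omega> F \<and> (\<forall>T. simplex n \<Omega> T \<and> F \<subseteq> T \<longrightarrow> T = F)}"

text \<open>The multiset of facets, each facet F repeated \<Omega> F times, realised as
pairs (F, k) with k < \<Omega> F; the collapse map is fst.\<close>

definition facets_tilde :: "nat \<Rightarrow> (nat set \<Rightarrow> nat) \<Rightarrow> (nat set \<times> nat) set" where
  "facets_tilde n \<Omega> = {(F, k). F \<in> facets n \<Omega> \<and> k < \<Omega> F}"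

definition collapse :: "nat set \<times> nat \<Rightarrow> nat set" where
  "collapse = fst"

definition wsc_action ::
  "('g, 'b) monoid_scheme \<Rightarrow> nat \<Rightarrow> (nat set \<Rightarrow> nat) \<Rightarrow> ('g \<Rightarrow> nat \<Rightarrow> nat)
    \<Rightarrow> ('g \<Rightarrow> nat set \<times> nat \<Rightarrow> nat set \<times> nat) \<Rightarrow> bool" where
  "wsc_action G n \<Omega> \<phi> \<psi> \<longleftrightarrow>
     group_action G {0..n} \<phi> \<and>
     (\<forall>g\<in>carrier G. \<forall>S. S \<subseteq> {0..n} \<longrightarrow> \<Omega> (\<phi> g ` S) = \<Omega> S) \<and>
     group_action G (facets_tilde n \<Omega>) \<psi> \<and>
     (\<forall>g\<in>carrier G. \<forall>x\<in>facets_tilde n \<Omega>. collapse (\<psi> g x) = \<phi> g ` collapse x)"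

definition free_wsc_action ::
  "('g, 'b) monoid_scheme \<Rightarrow> nat \<Rightarrow> (nat set \<Rightarrow> nat)
    \<Rightarrow> ('g \<Rightarrow> nat set \<times> nat \<Rightarrow> nat set \<times> nat) \<Rightarrow> bool" where
  "free_wsc_action G n \<Omega> \<psi> \<longleftrightarrow>
     (\<forall>g\<in>carrier G. \<forall>x\<in>facets_tilde n \<Omega>. \<psi> g x = x \<longrightarrow> g = \<one>\<^bsub>G\<^esub>)"

end

theory Submission imports Defs begin
lemma group_actionI':
  fixes G (structure)
  assumes grp: "group G"
    and cl: "\<And>g x. g \<in> carrier G \<Longrightarrow> x \<in> E \<Longrightarrow> f g x \<in> E"
    and ext: "\<And>g. g \<in> carrier G \<Longrightarrow> f g \<in> extensional E"
    and comp: "\<And>g h x. g \<in> carrier G \<Longrightarrow> h \<in> carrier G \<Longrightarrow> x \<in> E \<Longrightarrow> f (g \<otimes>\<^bsub>G\<^esub> h) x = f g (f h x)"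
    and one: "\<And>x. x \<in> E \<Longrightarrow> f \<one>\<^bsub>G\<^esub> x = x"
  shows "group_action G E f"
proof -
  interpret group G by (rule grp)
  have bij: "f g \<in> Bij E" if g: "g \<in> carrier G" for g
  proof -
    have "bij_betw (f g) E E"
      apply (rule bij_betw_byWitness[where f' = "f (inv g)"])
      using g cl comp one by (auto simp flip: comp)
    then show ?thesis using ext[OF g] by (simp add: Bij_def)
  qed
  have hom: "f \<in> hom G (BijGroup E)"
  proof (rule homI)
    fix g assume "g \<in> carrier G" then show "f g \<in> carrier (BijGroup E)"
      using bij by (simp add: BijGroup_def)
  next
    fix g h assume g: "g \<in> carrier G" and h: "h \<in> carrier G"
    show "f (g \<otimes> h) = f g \<otimes>\<^bsub>BijGroup E\<^esub> f h"
    proof -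
      have "f (g \<otimes> h) = compose E (f g) (f h)"
        apply (rule extensionalityI[OF ext[of "g \<otimes> h"]])
        using g h apply simp
         apply (simp add: compose_def)
        using g h comp by (simp add: compose_def)
      then show ?thesis using bij g h by (simp add: BijGroup_def)
    qed
  qed
  show ?thesis
    unfolding group_action_def group_hom_def group_hom_axioms_def
    using grp group_BijGroup hom by blast
qed

lemma facet_image:
  fixes G (structure)
  assumes A: "group_action G {0..n} \<phi>" and inv: "\<forall>g\<in>carrier G. \<forall>S. S \<subseteq> {0..n} \<longrightarrow> \<Omega> (\<phi> g ` S) = \<Omega> S"
    and g: "g \<in> carrier G" and F: "F \<in> facets n \<Omega>"
  shows "\<phi> g ` F \<in> facets n \<Omega>"
proof -
  interpret group_action G "{0..n}" \<phi> by (rule A)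
  interpret group G using group_hom group_hom.axioms(1) by auto
  have sub: "\<phi> h ` S \<subseteq> {0..n}" if "h \<in> carrier G" "S \<subseteq> {0..n}" for h S
    using that surj_prop by blast
  have bk: "\<phi> (inv h) ` (\<phi> h ` S) = S" if h: "h \<in> carrier G" and S: "S \<subseteq> {0..n}" for h S
  proof -
    have pt: "\<phi> (inv h) (\<phi> h x) = x" if "x \<in> S" for x
      using orbit_sym_aux[OF h, of x "\<phi> h x"] that S by blast
    have "\<phi> (inv h) ` (\<phi> h ` S) = (\<lambda>x. \<phi> (inv h) (\<phi> h x)) ` S" by (simp only: image_image)
    also have "\<dots> = (\<lambda>x. x) ` S" using pt by (intro image_cong) auto
    finally show ?thesis by simp
  qed
  have FS: "F \<subseteq> {0..n}" "\<Omega> F \<noteq> 0" and Fmax: "\<And>T. simplex n \<Omega> T \<Longrightarrow> F \<subseteq> T \<Longrightarrow> T = F"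
    using F by (auto simp: facets_def simplex_def)
  show ?thesis unfolding facets_def
  proof (intro CollectI conjI allI impI)
    show "simplex n \<Omega> (\<phi> g ` F)" using FS g inv sub by (simp add: simplex_def)
    fix T assume T: "simplex n \<Omega> T \<and> \<phi> g ` F \<subseteq> T"
    then have Tn: "T \<subseteq> {0..n}" "\<Omega> T \<noteq> 0" by (auto simp: simplex_def)
    have "F \<subseteq> \<phi> (inv g) ` T" using T bk[OF g FS(1)] by blast
    moreover have "simplex n \<Omega> (\<phi> (inv g) ` T)" using Tn g inv sub[of "inv g" T] by (simp add: simplex_def)
    ultimately have "\<phi> (inv g) ` T = F" using Fmax by blast
    then have "\<phi> g ` (\<phi> (inv g) ` T) = \<phi> g ` F" by simp
    moreover have "\<phi> g ` (\<phi> (inv g) ` T) = T" using bk[of "inv g" T] Tn g by simp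
    ultimately show "T = \<phi> g ` F" by simp
  qed
qed


theorem proposition2p7:
  fixes G :: "('g, 'b) monoid_scheme"
    and n :: nat
    and \<Omega> :: "nat set \<Rightarrow> nat"
    and \<phi> :: "'g \<Rightarrow> nat \<Rightarrow> nat"
    and \<psi> :: "'g \<Rightarrow> nat set \<times> nat \<Rightarrow> nat set \<times> nat"
  assumes "group G" and "finite (carrier G)"
    and "wsc n \<Omega>"
    and "wsc_action G n \<Omega> \<phi> \<psi>"
  shows "\<exists>\<Omega>' \<psi>'. wsc n \<Omega>' \<and>
           (\<forall>S. S \<subseteq> {0..n} \<and> S \<notin> facets n \<Omega> \<longrightarrow> \<Omega>' S = \<Omega> S) \<and>
           facets n \<Omega>' = facets n \<Omega> \<and>
           (\<forall>F\<in>facets n \<Omega>. \<Omega> F \<le> \<Omega>' F) \<and>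
           wsc_action G n \<Omega>' \<phi> \<psi>' \<and>
           free_wsc_action G n \<Omega>' \<psi>' \<and>
           (\<exists>ct. ct \<in> facets_tilde n \<Omega>' \<rightarrow> facets_tilde n \<Omega> \<and>
                 (\<forall>g\<in>carrier G. \<forall>x\<in>facets_tilde n \<Omega>'. ct (\<psi>' g x) = \<psi> g (ct x)) \<and>
                 (\<forall>x\<in>facets_tilde n \<Omega>'. collapse (ct x) = collapse x))"
proof -
  interpret grp: group G by (rule assms(1))
  have A: "group_action G {0..n} \<phi>" and inv: "\<forall>g\<in>carrier G. \<forall>S. S \<subseteq> {0..n} \<longrightarrow> \<Omega> (\<phi> g ` S) = \<Omega> S"
    and B: "group_action G (facets_tilde n \<Omega>) \<psi>"
    and col: "\<forall>g\<in>carrier G. \<forall>x\<in>facets_tilde n \<Omega>. collapse (\<psi> g x) = \<phi> g ` collapse x"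
    using assms(4) by (auto simp: wsc_action_def)
  interpret A: group_action G "{0..n}" \<phi> by (rule A)
  interpret B: group_action G "facets_tilde n \<Omega>" \<psi> by (rule B)
  define N where "N = card (carrier G)"
  have N0: "N > 0" using assms(2) grp.one_closed unfolding N_def by (metis card_gt_0_iff empty_iff)
  obtain e where e: "bij_betw e {0..<N} (carrier G)"
    using ex_bij_betw_nat_finite[OF assms(2)] unfolding N_def by blast
  define idx where "idx = inv_into {0..<N} e"
  have e_in: "r < N \<Longrightarrow> e r \<in> carrier G" for r using e by (auto simp: bij_betw_def)
  have idx_lt: "h \<in> carrier G \<Longrightarrow> idx h < N" for h
    using e unfolding idx_def by (metis atLeastLessThan_iff bij_betw_def inv_into_into)
  have e_idx: "h \<in> carrier G \<Longrightarrow> e (idx h) = h" for h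
    using e unfolding idx_def by (simp add: bij_betw_inv_into_right)
  have idx_e: "r < N \<Longrightarrow> idx (e r) = r" for r
    using e unfolding idx_def by (simp add: bij_betw_def inv_into_f_f)
  define \<Omega>' where "\<Omega>' S = (if S \<in> facets n \<Omega> then \<Omega> S * N else \<Omega> S)" for S
  have simp_eq: "simplex n \<Omega>' = simplex n \<Omega>"
    using N0 by (auto simp: simplex_def \<Omega>'_def fun_eq_iff)
  have fac_eq: "facets n \<Omega>' = facets n \<Omega>" unfolding facets_def simp_eq ..
  have ft': "facets_tilde n \<Omega>' = {(F, k). F \<in> facets n \<Omega> \<and> k < \<Omega> F * N}"
    unfolding facets_tilde_def fac_eq by (auto simp: \<Omega>'_def)
  define \<psi>' where "\<psi>' g x = (if x \<in> facets_tilde n \<Omega>' then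
      (fst (\<psi> g (fst x, snd x div N)), snd (\<psi> g (fst x, snd x div N)) * N + idx (g \<otimes>\<^bsub>G\<^esub> e (snd x mod N)))
      else undefined)" for g x
  define ct where "ct x = (fst x, snd x div N)" for x :: "nat set \<times> nat"
  have ct_in: "ct x \<in> facets_tilde n \<Omega>" if xin: "x \<in> facets_tilde n \<Omega>'" for x
  proof -
    obtain F k where x: "x = (F, k)" "F \<in> facets n \<Omega>" "k < \<Omega> F * N" using xin unfolding ft' by blast
    have "k div N < \<Omega> F" using x(3) N0 by (simp add: less_mult_imp_div_less)
    then show ?thesis using x unfolding ct_def facets_tilde_def by simp
  qed
  have fac_sub: "F \<in> facets n \<Omega> \<Longrightarrow> F \<subseteq> {0..n} \<and> \<Omega> F \<noteq> 0" for F
    by (auto simp: facets_def simplex_def)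
  have psi'_eq: "\<psi>' g x = (fst (\<psi> g (ct x)), snd (\<psi> g (ct x)) * N + idx (g \<otimes>\<^bsub>G\<^esub> e (snd x mod N)))"
    if "x \<in> facets_tilde n \<Omega>'" for g x
    using that unfolding \<psi>'_def ct_def by simp
  have psi'_in: "\<psi>' g x \<in> facets_tilde n \<Omega>'" if g: "g \<in> carrier G" and x: "x \<in> facets_tilde n \<Omega>'" for g x
  proof -
    obtain F2 j2 where eq: "\<psi> g (ct x) = (F2, j2)" by (cases "\<psi> g (ct x)")
    have "(F2, j2) \<in> facets_tilde n \<Omega>" using B.element_image[OF g ct_in[OF x] eq] .
    then have F2: "F2 \<in> facets n \<Omega>" "j2 < \<Omega> F2" by (auto simp: facets_tilde_def)
    have i: "idx (g \<otimes>\<^bsub>G\<^esub> e (snd x mod N)) < N" using g e_in N0 idx_lt by simp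
    have "j2 * N + idx (g \<otimes>\<^bsub>G\<^esub> e (snd x mod N)) < (j2 + 1) * N" using i by simp
    also have "\<dots> \<le> \<Omega> F2 * N" using F2(2) by (intro mult_le_mono1) simp
    finally show ?thesis using psi'_eq[OF x, of g] eq F2(1) unfolding ft' by simp
  qed
  have ct_psi': "ct (\<psi>' g x) = \<psi> g (ct x)" if g: "g \<in> carrier G" and x: "x \<in> facets_tilde n \<Omega>'" for g x
  proof -
    have i: "idx (g \<otimes>\<^bsub>G\<^esub> e (snd x mod N)) < N" using g e_in N0 idx_lt by simp
    show ?thesis using psi'_eq[OF x, of g] i unfolding ct_def[of "\<psi>' g x"] by simp
  qed
  have mod_psi': "snd (\<psi>' g x) mod N = idx (g \<otimes>\<^bsub>G\<^esub> e (snd x mod N))" if g: "g \<in> carrier G" and x: "x \<in> facets_tilde n \<Omega>'" for g x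
  proof -
    have i: "idx (g \<otimes>\<^bsub>G\<^esub> e (snd x mod N)) < N" using g e_in N0 idx_lt by simp
    show ?thesis using psi'_eq[OF x, of g] i by simp
  qed
  have act': "group_action G (facets_tilde n \<Omega>') \<psi>'"
  proof (rule group_actionI'[OF assms(1)])
    show "\<And>g x. g \<in> carrier G \<Longrightarrow> x \<in> facets_tilde n \<Omega>' \<Longrightarrow> \<psi>' g x \<in> facets_tilde n \<Omega>'" by (rule psi'_in)
    show "\<And>g. \<psi>' g \<in> extensional (facets_tilde n \<Omega>')" by (simp add: \<psi>'_def extensional_def)
  next
    fix g h x assume g: "g \<in> carrier G" and h: "h \<in> carrier G" and x: "x \<in> facets_tilde n \<Omega>'"
    have hx: "\<psi>' h x \<in> facets_tilde n \<Omega>'" by (rule psi'_in[OF h x])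
    have r: "snd x mod N < N" using N0 by simp
    have "\<psi>' g (\<psi>' h x) = (fst (\<psi> g (\<psi> h (ct x))), snd (\<psi> g (\<psi> h (ct x))) * N + idx (g \<otimes>\<^bsub>G\<^esub> (h \<otimes>\<^bsub>G\<^esub> e (snd x mod N))))"
      using psi'_eq[OF hx, of g] ct_psi'[OF h x] mod_psi'[OF h x] e_idx h e_in[OF r] by simp
    also have "\<dots> = \<psi>' (g \<otimes>\<^bsub>G\<^esub> h) x"
      using psi'_eq[OF x, of "g \<otimes>\<^bsub>G\<^esub> h"] B.composition_rule[OF ct_in[OF x] g h] g h e_in[OF r]
      by (simp add: grp.m_assoc)
    finally show "\<psi>' (g \<otimes>\<^bsub>G\<^esub> h) x = \<psi>' g (\<psi>' h x)" by simp
  next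
    fix x assume x: "x \<in> facets_tilde n \<Omega>'"
    have r: "snd x mod N < N" using N0 by simp
    have one: "\<psi> \<one>\<^bsub>G\<^esub> (ct x) = ct x" using B.id_eq_one ct_in[OF x] by (metis restrict_apply')
    show "\<psi>' \<one>\<^bsub>G\<^esub> x = x" using psi'_eq[OF x, of "\<one>\<^bsub>G\<^esub>"] one e_in[OF r] idx_e[OF r]
      by (simp add: ct_def prod_eq_iff)
  qed
  have wsc': "wsc n \<Omega>'"
    unfolding wsc_def
  proof (intro conjI allI impI ballI)
    fix S1 S2 assume S: "S1 \<subseteq> S2 \<and> S2 \<subseteq> {0..n}"
    have d: "\<Omega> S1 dvd \<Omega> S2" using assms(3) S by (auto simp: wsc_def)
    show "\<Omega>' S1 dvd \<Omega>' S2"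
    proof (cases "S1 \<in> facets n \<Omega>")
      case True
      show ?thesis
      proof (cases "\<Omega> S2 = 0")
        case False
        then have "S2 = S1" using True S unfolding facets_def simplex_def by blast
        then show ?thesis by simp
      qed (simp add: \<Omega>'_def)
    next
      case False
      then show ?thesis using d by (auto simp: \<Omega>'_def)
    qed
  next
    fix i assume "i \<in> {0..n::nat}"
    then show "\<Omega>' {i} \<noteq> 0" using assms(3) N0 by (auto simp: wsc_def \<Omega>'_def)
  qed
  have inv': "\<forall>g\<in>carrier G. \<forall>S. S \<subseteq> {0..n} \<longrightarrow> \<Omega>' (\<phi> g ` S) = \<Omega>' S"
  proof (intro ballI allI impI)
    fix g S assume g: "g \<in> carrier G" and S: "S \<subseteq> {0..n}"
    have bk: "\<phi> (inv\<^bsub>G\<^esub> g) ` (\<phi> g ` S) = S"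
    proof -
      have pt: "\<phi> (inv\<^bsub>G\<^esub> g) (\<phi> g x) = x" if "x \<in> S" for x
        using A.orbit_sym_aux[OF g, of x "\<phi> g x"] that S by blast
      have "\<phi> (inv\<^bsub>G\<^esub> g) ` (\<phi> g ` S) = (\<lambda>x. \<phi> (inv\<^bsub>G\<^esub> g) (\<phi> g x)) ` S" by (simp only: image_image)
      also have "\<dots> = (\<lambda>x. x) ` S" using pt by (intro image_cong) auto
      finally show ?thesis by simp
    qed
    have "\<phi> g ` S \<in> facets n \<Omega> \<longleftrightarrow> S \<in> facets n \<Omega>"
      using facet_image[OF A inv g, of S] facet_image[OF A inv, of "inv\<^bsub>G\<^esub> g" "\<phi> g ` S"] bk g by auto
    then show "\<Omega>' (\<phi> g ` S) = \<Omega>' S" using inv g S by (simp add: \<Omega>'_def)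
  qed
  show ?thesis
  proof (intro exI conjI)
    show "wsc n \<Omega>'" by (rule wsc')
    show "\<forall>S. S \<subseteq> {0..n} \<and> S \<notin> facets n \<Omega> \<longrightarrow> \<Omega>' S = \<Omega> S" by (simp add: \<Omega>'_def)
    show "facets n \<Omega>' = facets n \<Omega>" by (rule fac_eq)
    show "\<forall>F\<in>facets n \<Omega>. \<Omega> F \<le> \<Omega>' F" using N0 by (simp add: \<Omega>'_def)
    show "wsc_action G n \<Omega>' \<phi> \<psi>'"
      unfolding wsc_action_def
    proof (intro conjI)
      show "group_action G {0..n} \<phi>" by (rule A)
      show "\<forall>g\<in>carrier G. \<forall>S. S \<subseteq> {0..n} \<longrightarrow> \<Omega>' (\<phi> g ` S) = \<Omega>' S" by (rule inv')
      show "group_action G (facets_tilde n \<Omega>') \<psi>'" by (rule act')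
      show "\<forall>g\<in>carrier G. \<forall>x\<in>facets_tilde n \<Omega>'. collapse (\<psi>' g x) = \<phi> g ` collapse x"
      proof (intro ballI)
      fix g x assume g: "g \<in> carrier G" and x: "x \<in> facets_tilde n \<Omega>'"
      have "collapse (\<psi>' g x) = collapse (\<psi> g (ct x))" using psi'_eq[OF x, of g] by (simp add: collapse_def)
      also have "\<dots> = \<phi> g ` collapse (ct x)" using col g ct_in[OF x] by blast
      finally show "collapse (\<psi>' g x) = \<phi> g ` collapse x" by (simp add: ct_def collapse_def)
      qed
    qed
    show "free_wsc_action G n \<Omega>' \<psi>'"
      unfolding free_wsc_action_def
    proof (intro ballI impI)
      fix g x assume g: "g \<in> carrier G" and x: "x \<in> facets_tilde n \<Omega>'" and fx: "\<psi>' g x = x"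
      have r: "snd x mod N < N" using N0 by simp
      have "idx (g \<otimes>\<^bsub>G\<^esub> e (snd x mod N)) = snd x mod N" using mod_psi'[OF g x] fx by simp
      then have "g \<otimes>\<^bsub>G\<^esub> e (snd x mod N) = e (snd x mod N)"
        using e_idx g e_in[OF r] by (metis grp.m_closed)
      then show "g = \<one>\<^bsub>G\<^esub>" using g e_in[OF r] by (metis grp.r_cancel_one)
    qed
    show "ct \<in> facets_tilde n \<Omega>' \<rightarrow> facets_tilde n \<Omega>" using ct_in by blast
    show "\<forall>g\<in>carrier G. \<forall>x\<in>facets_tilde n \<Omega>'. ct (\<psi>' g x) = \<psi> g (ct x)" using ct_psi' by blast
    show "\<forall>x\<in>facets_tilde n \<Omega>'. collapse (ct x) = collapse x" by (simp add: ct_def collapse_def)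
  qed
qed

end
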